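(* Let $M^{2n+1}(f,Q,\xi,\eta,g)$ be a weak almost contact metric manifold such that $(\nabla_Xf)Y=g(X,Y)\xi-\eta(Y)X$ for all vector fields $X,Y$, and $(\nabla_X\widetilde Q)Y=0$ for all $X\in TM$, $Y\in\ker\eta$. Then $Q=\mathrm{id}_{TM}$ and $M(f,\xi,\eta,g)$ is Sasakian.
   Context: A weak almost contact metric structure on $M^{2n+1}$ consists of a $(1,1)$-tensor field $f$ of rank $2n$, a vector field $\xi$, a $1$-form $\eta$, a nonsingular $(1,1)$-tensor field $Q$ and a Riemannian metric $g$ such that $f^2=-Q+\eta\otimes\xi$, $\eta(\xi)=1$, $Q\xi=\xi$, $\ker\eta$ is $f$-invariant, and $g(fX,fY)=g(X,QY)-\eta(X)\eta(Y)$. $\widetilde Q=Q-\mathrm{id}$, $\nabla$ is the Levi-Civita connection of $g$. A Sasakian structure is an almost contact metric structure ($Q=\mathrm{id}$) with $(\nabla_Xf)Y=g(X,Y)\xi-\eta(Y)X$. *)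

theory Defs
  imports "HOL-Analysis.Analysis"
begin

text \<open>Local (chart) model: the manifold is an open set U in real^'m, tangent vectors at
 each point are elements of real^'m. Tensor fields are given pointwise.\<close>

type_synonym 'm vec = "real ^ 'm"

fun iter_dd :: "('m::finite) vec list \<Rightarrow> (('m::finite) vec \<Rightarrow> real) \<Rightarrow> ('m::finite) vec \<Rightarrow> real" where
  "iter_dd [] h = h"
| "iter_dd (v # vs) h = (\<lambda>p. frechet_derivative (iter_dd vs h) (at p) v)"

definition smooth_fun :: "('m::finite) vec set \<Rightarrow> (('m::finite) vec \<Rightarrow> real) \<Rightarrow> bool" where
  "smooth_fun U h \<longleftrightarrow> (\<forall>vs. \<forall>p\<in>U. iter_dd vs h differentiable (at p))"

definition smooth_vf :: "('m::finite) vec set \<Rightarrow> (('m::finite) vec \<Rightarrow> ('m::finite) vec) \<Rightarrow> bool" where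
  "smooth_vf U X \<longleftrightarrow> (\<forall>i. smooth_fun U (\<lambda>q. X q $ i))"

definition smooth_11 :: "('m::finite) vec set \<Rightarrow> (('m::finite) vec \<Rightarrow> ('m::finite) vec \<Rightarrow> ('m::finite) vec) \<Rightarrow> bool" where
  "smooth_11 U F \<longleftrightarrow> (\<forall>w. smooth_vf U (\<lambda>q. F q w))"

definition smooth_form :: "('m::finite) vec set \<Rightarrow> (('m::finite) vec \<Rightarrow> ('m::finite) vec \<Rightarrow> real) \<Rightarrow> bool" where
  "smooth_form U \<eta> \<longleftrightarrow> (\<forall>w. smooth_fun U (\<lambda>q. \<eta> q w))"

definition smooth_02 :: "('m::finite) vec set \<Rightarrow> (('m::finite) vec \<Rightarrow> ('m::finite) vec \<Rightarrow> ('m::finite) vec \<Rightarrow> real) \<Rightarrow> bool" where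
  "smooth_02 U g \<longleftrightarrow> (\<forall>v w. smooth_fun U (\<lambda>q. g q v w))"

definition riemannian_metric :: "('m::finite) vec set \<Rightarrow> (('m::finite) vec \<Rightarrow> ('m::finite) vec \<Rightarrow> ('m::finite) vec \<Rightarrow> real) \<Rightarrow> bool" where
  "riemannian_metric U g \<longleftrightarrow> smooth_02 U g \<and>
     (\<forall>p\<in>U. bilinear (g p) \<and> (\<forall>v w. g p v w = g p w v) \<and> (\<forall>v. v \<noteq> 0 \<longrightarrow> g p v v > 0))"

text \<open>Levi-Civita connection in the chart, given by its Christoffel map Gamma:
  nabla_X Y = DY(X) + Gamma(X,Y). Levi-Civita = torsion free and metric.\<close>
definition levi_civita :: "('m::finite) vec set \<Rightarrow> (('m::finite) vec \<Rightarrow> ('m::finite) vec \<Rightarrow> ('m::finite) vec \<Rightarrow> real)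
    \<Rightarrow> (('m::finite) vec \<Rightarrow> ('m::finite) vec \<Rightarrow> ('m::finite) vec \<Rightarrow> ('m::finite) vec) \<Rightarrow> bool" where
  "levi_civita U g \<Gamma> \<longleftrightarrow> (\<forall>v. smooth_11 U (\<lambda>q w. \<Gamma> q v w)) \<and>
     (\<forall>p\<in>U. bilinear (\<Gamma> p) \<and> (\<forall>v w. \<Gamma> p v w = \<Gamma> p w v) \<and>
        (\<forall>v w z. frechet_derivative (\<lambda>q. g q w z) (at p) v
                   = g p (\<Gamma> p v w) z + g p w (\<Gamma> p v z)))"

definition nabla11 :: "(('m::finite) vec \<Rightarrow> ('m::finite) vec \<Rightarrow> ('m::finite) vec \<Rightarrow> ('m::finite) vec)
    \<Rightarrow> (('m::finite) vec \<Rightarrow> ('m::finite) vec \<Rightarrow> ('m::finite) vec) \<Rightarrow> ('m::finite) vec \<Rightarrow> ('m::finite) vec \<Rightarrow> ('m::finite) vec \<Rightarrow> ('m::finite) vec" where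
  "nabla11 \<Gamma> F p v w = frechet_derivative (\<lambda>q. F q w) (at p) v + \<Gamma> p v (F p w) - F p (\<Gamma> p v w)"

definition weak_acm_structure :: "nat \<Rightarrow> ('m::finite) vec set \<Rightarrow> (('m::finite) vec \<Rightarrow> ('m::finite) vec \<Rightarrow> ('m::finite) vec)
    \<Rightarrow> (('m::finite) vec \<Rightarrow> ('m::finite) vec \<Rightarrow> ('m::finite) vec) \<Rightarrow> (('m::finite) vec \<Rightarrow> ('m::finite) vec) \<Rightarrow> (('m::finite) vec \<Rightarrow> ('m::finite) vec \<Rightarrow> real)
    \<Rightarrow> (('m::finite) vec \<Rightarrow> ('m::finite) vec \<Rightarrow> ('m::finite) vec \<Rightarrow> real) \<Rightarrow> bool" where
  "weak_acm_structure n U f Q \<xi> \<eta> g \<longleftrightarrow>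
     CARD('m) = 2 * n + 1 \<and> open U \<and> riemannian_metric U g \<and>
     smooth_11 U f \<and> smooth_11 U Q \<and> smooth_vf U \<xi> \<and> smooth_form U \<eta> \<and>
     (\<forall>p\<in>U. linear (f p) \<and> linear (Q p) \<and> linear (\<eta> p) \<and>
        dim (range (f p)) = 2 * n \<and>
        (\<forall>v. f p (f p v) = - Q p v + \<eta> p v *\<^sub>R \<xi> p) \<and>
        \<eta> p (\<xi> p) = 1 \<and> Q p (\<xi> p) = \<xi> p \<and>
        (\<forall>v. \<eta> p v = 0 \<longrightarrow> \<eta> p (f p v) = 0) \<and>
        bij (Q p) \<and>
        (\<forall>v w. g p (f p v) (f p w) = g p v (Q p w) - \<eta> p v * \<eta> p w))"

definition acm_structure :: "nat \<Rightarrow> ('m::finite) vec set \<Rightarrow> (('m::finite) vec \<Rightarrow> ('m::finite) vec \<Rightarrow> ('m::finite) vec)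
    \<Rightarrow> (('m::finite) vec \<Rightarrow> ('m::finite) vec) \<Rightarrow> (('m::finite) vec \<Rightarrow> ('m::finite) vec \<Rightarrow> real)
    \<Rightarrow> (('m::finite) vec \<Rightarrow> ('m::finite) vec \<Rightarrow> ('m::finite) vec \<Rightarrow> real) \<Rightarrow> bool" where
  "acm_structure n U f \<xi> \<eta> g \<longleftrightarrow> weak_acm_structure n U f (\<lambda>p. id) \<xi> \<eta> g"

definition sasakian :: "nat \<Rightarrow> ('m::finite) vec set \<Rightarrow> (('m::finite) vec \<Rightarrow> ('m::finite) vec \<Rightarrow> ('m::finite) vec \<Rightarrow> ('m::finite) vec)
    \<Rightarrow> (('m::finite) vec \<Rightarrow> ('m::finite) vec \<Rightarrow> ('m::finite) vec)
    \<Rightarrow> (('m::finite) vec \<Rightarrow> ('m::finite) vec) \<Rightarrow> (('m::finite) vec \<Rightarrow> ('m::finite) vec \<Rightarrow> real)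
    \<Rightarrow> (('m::finite) vec \<Rightarrow> ('m::finite) vec \<Rightarrow> ('m::finite) vec \<Rightarrow> real) \<Rightarrow> bool" where
  "sasakian n U \<Gamma> f \<xi> \<eta> g \<longleftrightarrow> acm_structure n U f \<xi> \<eta> g \<and>
     (\<forall>p\<in>U. \<forall>v w. nabla11 \<Gamma> f p v w = g p v w *\<^sub>R \<xi> p - \<eta> p w *\<^sub>R v)"

end

theory Submission imports Defs begin

lemma vec_expand: "(x::real^'n) = (\<Sum>j\<in>UNIV. (x $ j) *\<^sub>R axis j 1)"
  by (metis basis_expansion scalar_mult_eq_scaleR)

lemma vf_differentiable:
  fixes X :: "'a::real_normed_vector \<Rightarrow> real^'n"
  assumes "\<And>i. (\<lambda>q. X q $ i) differentiable (at p)"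
  shows "X differentiable (at p)"
proof -
  have "(\<lambda>q. \<Sum>j\<in>UNIV. (X q $ j) *\<^sub>R (axis j 1::real^'n)) differentiable (at p)"
    by (intro differentiable_sum ballI differentiable_scaleR[OF assms differentiable_const]) simp
  moreover have "(\<lambda>q. \<Sum>j\<in>UNIV. (X q $ j) *\<^sub>R (axis j 1::real^'n)) = X"
    by (rule ext, rule vec_expand[symmetric])
  ultimately show ?thesis by simp
qed

lemma GL:
  fixes \<Phi> :: "real^'n \<Rightarrow> real^'n \<Rightarrow> 'b::real_normed_vector"
  assumes U: "open U" "p \<in> U" and lin: "\<And>q. q \<in> U \<Longrightarrow> linear (\<Phi> q)"
    and dP: "\<And>x. (\<lambda>q. \<Phi> q x) differentiable (at p)"
    and dX: "(X has_derivative X') (at p)"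
  shows "((\<lambda>q. \<Phi> q (X q)) has_derivative
           (\<lambda>v. \<Phi> p (X' v) + frechet_derivative (\<lambda>q. \<Phi> q (X p)) (at p) v)) (at p)"
proof -
  define e where "e j = (axis j 1::real^'n)" for j
  define D where "D j = frechet_derivative (\<lambda>q. \<Phi> q (e j)) (at p)" for j
  have DD: "((\<lambda>q. \<Phi> q (e j)) has_derivative D j) (at p)" for j
    unfolding D_def by (rule dP[THEN frechet_derivative_works[THEN iffD1]])
  have expand: "\<Phi> q x = (\<Sum>j\<in>UNIV. (x $ j) *\<^sub>R \<Phi> q (e j))" if "q \<in> U" for q x
  proof -
    have "\<Phi> q x = \<Phi> q (\<Sum>j\<in>UNIV. (x $ j) *\<^sub>R e j)" unfolding e_def using vec_expand by metis
    also have "\<dots> = (\<Sum>j\<in>UNIV. (x $ j) *\<^sub>R \<Phi> q (e j))"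
      using lin[OF that] by (simp add: linear_sum linear_scale)
    finally show ?thesis .
  qed
  have Xj: "((\<lambda>q. X q $ j) has_derivative (\<lambda>v. X' v $ j)) (at p)" for j
    using bounded_linear.has_derivative[OF bounded_linear_vec_nth dX] .
  have h1: "((\<lambda>q. \<Sum>j\<in>UNIV. (X q $ j) *\<^sub>R \<Phi> q (e j)) has_derivative
        (\<lambda>v. \<Sum>j\<in>UNIV. X p $ j *\<^sub>R D j v + X' v $ j *\<^sub>R \<Phi> p (e j))) (at p)"
    by (intro has_derivative_sum has_derivative_scaleR Xj DD)
  have h1': "((\<lambda>q. \<Phi> q (X q)) has_derivative
        (\<lambda>v. \<Sum>j\<in>UNIV. X p $ j *\<^sub>R D j v + X' v $ j *\<^sub>R \<Phi> p (e j))) (at p)"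
    by (rule has_derivative_transform_within_open[OF h1 U(1) U(2)]) (simp add: expand)
  have h2: "((\<lambda>q. \<Sum>j\<in>UNIV. (X p $ j) *\<^sub>R \<Phi> q (e j)) has_derivative
        (\<lambda>v. \<Sum>j\<in>UNIV. X p $ j *\<^sub>R D j v)) (at p)"
    by (intro has_derivative_sum has_derivative_scaleR_right DD)
  have h2': "((\<lambda>q. \<Phi> q (X p)) has_derivative
        (\<lambda>v. \<Sum>j\<in>UNIV. X p $ j *\<^sub>R D j v)) (at p)"
    by (rule has_derivative_transform_within_open[OF h2 U(1) U(2)]) (simp add: expand)
  have fd: "frechet_derivative (\<lambda>q. \<Phi> q (X p)) (at p) = (\<lambda>v. \<Sum>j\<in>UNIV. X p $ j *\<^sub>R D j v)"
    using frechet_derivative_at[OF h2'] by simp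
  have eq: "(\<lambda>v. \<Sum>j\<in>UNIV. X p $ j *\<^sub>R D j v + X' v $ j *\<^sub>R \<Phi> p (e j))
     = (\<lambda>v. \<Phi> p (X' v) + frechet_derivative (\<lambda>q. \<Phi> q (X p)) (at p) v)"
    unfolding fd by (rule ext) (simp add: sum.distrib expand[OF U(2), of "X' _"])
  show ?thesis using h1' unfolding eq .
qed

lemma fxi0:
  fixes F Qm :: "real^'n \<Rightarrow> real^'n" and E :: "real^'n \<Rightarrow> real"
  assumes lF: "linear F" and lQ: "linear Qm" and lE: "linear E"
    and ff: "\<And>v. F (F v) = - Qm v + E v *\<^sub>R x" and Ex: "E x = 1" and Qx: "Qm x = x"
    and inv: "\<And>v. E v = 0 \<Longrightarrow> E (F v) = 0" and bQ: "bij Qm"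
  shows "F x = 0"
proof -
  have f2: "F (F x) = 0" using ff[of x] Ex Qx by simp
  define a where "a = E (F x)"
  define k where "k = F x - a *\<^sub>R x"
  have "E k = 0" unfolding k_def a_def using lE Ex by (simp add: linear_diff linear_scale)
  hence "E (F k) = 0" by (rule inv)
  moreover have "F k = - (a *\<^sub>R F x)" unfolding k_def using lF f2 by (simp add: linear_diff linear_scale)
  ultimately have "a * a = 0" using lE unfolding a_def by (simp add: linear_neg linear_scale)
  hence a0: "a = 0" by simp
  have "Qm (F x) = 0" using ff[of "F x"] f2 a0 lF unfolding a_def by (simp add: linear_0)
  moreover have "Qm 0 = 0" using lQ by (simp add: linear_0)
  ultimately show ?thesis using bQ unfolding bij_def inj_def by metis
qed

lemma iter_dd_const: "\<exists>c. iter_dd vs (\<lambda>q. c0) = (\<lambda>q. c)"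
proof (induction vs)
  case Nil then show ?case by auto
next
  case (Cons v vs)
  then obtain c where "iter_dd vs (\<lambda>q. c0) = (\<lambda>q. c)" by blast
  then show ?case by (auto simp: frechet_derivative_at[OF has_derivative_const, symmetric])
qed

lemma smooth_fun_const: "smooth_fun U (\<lambda>q. c0)"
  unfolding smooth_fun_def
proof (intro allI ballI)
  fix vs p
  obtain c where "iter_dd vs (\<lambda>q. c0) = (\<lambda>q. c)" using iter_dd_const by blast
  then show "iter_dd vs (\<lambda>q. c0) differentiable at p" by simp
qed

lemma smooth_fun_diff: "smooth_fun U h \<Longrightarrow> p \<in> U \<Longrightarrow> h differentiable (at p)"
  unfolding smooth_fun_def by (metis iter_dd.simps(1))

lemma smooth_vf_diff: "smooth_vf U X \<Longrightarrow> p \<in> U \<Longrightarrow> X differentiable (at p)"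
  unfolding smooth_vf_def by (intro vf_differentiable) (metis smooth_fun_diff)

theorem mainTheorem14:
  fixes n :: nat and U :: "('m::finite) vec set"
    and f Q :: "'m vec \<Rightarrow> 'm vec \<Rightarrow> 'm vec" and \<xi> :: "'m vec \<Rightarrow> 'm vec"
    and \<eta> :: "'m vec \<Rightarrow> 'm vec \<Rightarrow> real" and g :: "'m vec \<Rightarrow> 'm vec \<Rightarrow> 'm vec \<Rightarrow> real"
    and \<Gamma> :: "'m vec \<Rightarrow> 'm vec \<Rightarrow> 'm vec \<Rightarrow> 'm vec"
  assumes "weak_acm_structure n U f Q \<xi> \<eta> g"
    and "levi_civita U g \<Gamma>"
    and "\<forall>p\<in>U. \<forall>v w. nabla11 \<Gamma> f p v w = g p v w *\<^sub>R \<xi> p - \<eta> p w *\<^sub>R v"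
    and "\<forall>p\<in>U. \<forall>v w. \<eta> p w = 0 \<longrightarrow> nabla11 \<Gamma> (\<lambda>q u. Q q u - u) p v w = 0"
  shows "(\<forall>p\<in>U. Q p = id) \<and> sasakian n U \<Gamma> f \<xi> \<eta> g"
proof -
  note W = assms(1)[unfolded weak_acm_structure_def]
  have oU: "open U" and rg: "riemannian_metric U g" and sf: "smooth_11 U f" and sQ: "smooth_11 U Q"
    and sxi: "smooth_vf U \<xi>" using W by auto
  have P: "\<And>p. p \<in> U \<Longrightarrow> linear (f p) \<and> linear (Q p) \<and> linear (\<eta> p) \<and>
        dim (range (f p)) = 2 * n \<and>
        (\<forall>v. f p (f p v) = - Q p v + \<eta> p v *\<^sub>R \<xi> p) \<and>
        \<eta> p (\<xi> p) = 1 \<and> Q p (\<xi> p) = \<xi> p \<and>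
        (\<forall>v. \<eta> p v = 0 \<longrightarrow> \<eta> p (f p (v)) = 0) \<and>
        bij (Q p) \<and>
        (\<forall>v w. g p (f p v) (f p w) = g p v (Q p w) - \<eta> p v * \<eta> p w)"
    using W by blast
  have G: "\<And>p. p \<in> U \<Longrightarrow> bilinear (g p) \<and> (\<forall>v w. g p v w = g p w v) \<and> (\<forall>v. v \<noteq> 0 \<longrightarrow> g p v v > 0)"
    using rg unfolding riemannian_metric_def by blast
  have sg: "smooth_02 U g" using rg unfolding riemannian_metric_def by blast
  note LC = assms(2)[unfolded levi_civita_def]
  have LCp: "\<And>p. p \<in> U \<Longrightarrow> bilinear (\<Gamma> p) \<and>
        (\<forall>v w z. frechet_derivative (\<lambda>q. g q w z) (at p) v
                   = g p (\<Gamma> p v w) z + g p w (\<Gamma> p v z))"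
    using LC by blast
  have fxi: "f q (\<xi> q) = 0" if "q \<in> U" for q
    using P[OF that] by (intro fxi0[of "f q" "Q q" "\<eta> q"]) auto
  have Qsa: "g q (Q q x) y = g q x (Q q y)" if "q \<in> U" for q x y
  proof -
    have "g q (Q q x) y = g q y (Q q x)" using G[OF that] by metis
    also have "\<dots> = g q (f q y) (f q x) + \<eta> q y * \<eta> q x" using P[OF that] by simp
    also have "\<dots> = g q (f q x) (f q y) + \<eta> q x * \<eta> q y" using G[OF that] by (metis mult.commute)
    also have "\<dots> = g q x (Q q y)" using P[OF that] by simp
    finally show ?thesis .
  qed
  have Qid: "Q p = id" if pU: "p \<in> U" for p
  proof -
    note Pp = P[OF pU] and Gp = G[OF pU] and LCpp = LCp[OF pU]
    have lf: "linear (f p)" and lQ: "linear (Q p)" and le: "linear (\<eta> p)" using Pp by auto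
    have lg1: "linear (g p x)" and lg2: "linear (\<lambda>y. g p y x)" for x
      using Gp unfolding bilinear_def by auto
    have lG: "linear (\<Gamma> p x)" for x using LCpp unfolding bilinear_def by auto
    have gl: "g p (x + y) z = g p x z + g p y z" "g p (x - y) z = g p x z - g p y z"
      "g p (c *\<^sub>R x) z = c * g p x z" "g p z (x + y) = g p z x + g p z y"
      "g p z (x - y) = g p z x - g p z y" "g p z (c *\<^sub>R x) = c * g p z x" for x y z c
      using linear_add[OF lg2[of z]] linear_diff[OF lg2[of z]] linear_scale[OF lg2[of z]]
        linear_add[OF lg1[of z]] linear_diff[OF lg1[of z]] linear_scale[OF lg1[of z]] by auto
    have gsym: "g p x y = g p y x" for x y using Gp by metis
    have met: "frechet_derivative (\<lambda>q. g q w z) (at p) v = g p (\<Gamma> p v w) z + g p w (\<Gamma> p v z)" for v w z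
      using LCpp by blast
    define d\<xi> where "d\<xi> = frechet_derivative \<xi> (at p)"
    have dxi: "(\<xi> has_derivative d\<xi>) (at p)"
      unfolding d\<xi>_def by (rule smooth_vf_diff[OF sxi pU, unfolded frechet_derivative_works])
    have fdiff: "(\<lambda>q. f q x) differentiable (at p)" for x
      using sf pU unfolding smooth_11_def by (metis smooth_vf_diff)
    have Qdiff: "(\<lambda>q. Q q x) differentiable (at p)" for x
      using sQ pU unfolding smooth_11_def by (metis smooth_vf_diff)
    have gdiff: "(\<lambda>q. g q x y) differentiable (at p)" for x y
      using sg pU unfolding smooth_02_def by (metis smooth_fun_diff)
    have nQ: "nabla11 \<Gamma> (\<lambda>q u. Q q u - u) p v w = nabla11 \<Gamma> Q p v w" for v w
    proof -
      have "((\<lambda>q. Q q w - w) has_derivative (\<lambda>h. frechet_derivative (\<lambda>q. Q q w) (at p) h - 0)) (at p)"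
        by (rule has_derivative_diff[OF Qdiff[of w, unfolded frechet_derivative_works] has_derivative_const])
      from frechet_derivative_at[OF this]
      have "frechet_derivative (\<lambda>q. Q q w - w) (at p) = frechet_derivative (\<lambda>q. Q q w) (at p)"
        by simp
      then show ?thesis unfolding nabla11_def using lG lQ by (simp add: linear_diff)
    qed
    have h4: "nabla11 \<Gamma> Q p v w = 0" if "\<eta> p w = 0" for v w
    proof -
      have "nabla11 \<Gamma> (\<lambda>q u. Q q u - u) p v w = 0" using assms(4) pU that by blast
      then show ?thesis unfolding nQ .
    qed
    have sa: "g p (nabla11 \<Gamma> Q p v a) b = g p a (nabla11 \<Gamma> Q p v b)" for v a b
    proof -
      have lgq: "linear (\<lambda>x. g q x y)" if "q \<in> U" for q y using G[OF that] unfolding bilinear_def by auto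
      have hA: "((\<lambda>q. g q (Q q a) b) has_derivative (\<lambda>v. g p (frechet_derivative (\<lambda>q. Q q a) (at p) v) b
           + frechet_derivative (\<lambda>q. g q (Q p a) b) (at p) v)) (at p)"
        by (rule GL[OF oU pU _ gdiff Qdiff[unfolded frechet_derivative_works]]) (erule lgq)
      have hB: "((\<lambda>q. g q (Q q b) a) has_derivative (\<lambda>v. g p (frechet_derivative (\<lambda>q. Q q b) (at p) v) a
           + frechet_derivative (\<lambda>q. g q (Q p b) a) (at p) v)) (at p)"
        by (rule GL[OF oU pU _ gdiff Qdiff[unfolded frechet_derivative_works]]) (erule lgq)
      have hD: "((\<lambda>q. g q (Q q a) b - g q (Q q b) a) has_derivative (\<lambda>v. 0)) (at p)"
      proof (rule has_derivative_transform_within_open[OF has_derivative_const oU pU])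
        fix q assume "q \<in> U"
        then have "g q a (Q q b) = g q (Q q b) a" using G by blast
        then show "0 = g q (Q q a) b - g q (Q q b) a" using Qsa[OF \<open>q \<in> U\<close>, of a b] by simp
      qed
      have "g p (frechet_derivative (\<lambda>q. Q q a) (at p) v) b
           + frechet_derivative (\<lambda>q. g q (Q p a) b) (at p) v -
           (g p (frechet_derivative (\<lambda>q. Q q b) (at p) v) a
           + frechet_derivative (\<lambda>q. g q (Q p b) a) (at p) v) = 0"
        using fun_cong[OF has_derivative_unique[OF has_derivative_diff[OF hA hB] hD], of v] by simp
      then have E: "g p (frechet_derivative (\<lambda>q. Q q a) (at p) v) b
           + (g p (\<Gamma> p v (Q p a)) b + g p (Q p a) (\<Gamma> p v b)) -
           (g p (frechet_derivative (\<lambda>q. Q q b) (at p) v) a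
           + (g p (\<Gamma> p v (Q p b)) a + g p (Q p b) (\<Gamma> p v a))) = 0"
        unfolding met .
      have e1: "g p (Q p (\<Gamma> p v a)) b = g p (Q p b) (\<Gamma> p v a)" using Qsa[OF pU, of "\<Gamma> p v a" b] gsym[of "\<Gamma> p v a"] by simp
      have e2: "g p a (Q p (\<Gamma> p v b)) = g p (Q p a) (\<Gamma> p v b)" using Qsa[OF pU, of a "\<Gamma> p v b"] by simp
      have L: "g p (nabla11 \<Gamma> Q p v a) b = g p (frechet_derivative (\<lambda>q. Q q a) (at p) v) b
          + g p (\<Gamma> p v (Q p a)) b - g p (Q p b) (\<Gamma> p v a)"
        unfolding nabla11_def using e1 by (simp add: gl)
      have R: "g p a (nabla11 \<Gamma> Q p v b) = g p (frechet_derivative (\<lambda>q. Q q b) (at p) v) a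
          + g p (\<Gamma> p v (Q p b)) a - g p (Q p a) (\<Gamma> p v b)"
        unfolding nabla11_def using e2 gsym[of a] by (simp add: gl)
      show ?thesis using E L R by linarith
    qed
    have Qf: "Q p (f p v) = f p v" for v
    proof -
      define Wv where "Wv = d\<xi> v + \<Gamma> p v (\<xi> p)"
      have b1: "f p (d\<xi> v) + frechet_derivative (\<lambda>q. f q (\<xi> p)) (at p) v = 0"
      proof -
        have h1: "((\<lambda>q. f q (\<xi> q)) has_derivative
             (\<lambda>v. f p (d\<xi> v) + frechet_derivative (\<lambda>q. f q (\<xi> p)) (at p) v)) (at p)"
          by (rule GL[OF oU pU _ fdiff dxi]) (use P in blast)
        have h2: "((\<lambda>q. f q (\<xi> q)) has_derivative (\<lambda>v. 0)) (at p)"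
          by (rule has_derivative_transform_within_open[OF has_derivative_const oU pU]) (simp add: fxi)
        show ?thesis using fun_cong[OF has_derivative_unique[OF h1 h2], of v] by simp
      qed
      have b2: "frechet_derivative (\<lambda>q. f q (\<xi> p)) (at p) v + \<Gamma> p v (f p (\<xi> p)) - f p (\<Gamma> p v (\<xi> p))
          = g p v (\<xi> p) *\<^sub>R \<xi> p - \<eta> p (\<xi> p) *\<^sub>R v"
        using assms(3) pU unfolding nabla11_def by blast
      have fW: "f p Wv = v - g p v (\<xi> p) *\<^sub>R \<xi> p"
      proof -
        have "\<Gamma> p v (f p (\<xi> p)) = 0" using fxi[OF pU] lG by (simp add: linear_0)
        moreover have "frechet_derivative (\<lambda>q. f q (\<xi> p)) (at p) v = - f p (d\<xi> v)"
          using b1 by (simp add: eq_neg_iff_add_eq_0 add.commute)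
        ultimately have "- f p (d\<xi> v) - f p (\<Gamma> p v (\<xi> p)) = g p v (\<xi> p) *\<^sub>R \<xi> p - v"
          using b2 Pp by simp
        then have "f p (\<Gamma> p v (\<xi> p)) + f p (d\<xi> v) = v - g p v (\<xi> p) *\<^sub>R \<xi> p"
          by (simp add: algebra_simps)
        then show ?thesis unfolding Wv_def using lf by (simp add: linear_add add.commute)
      qed

      have c1: "Q p (d\<xi> v) + frechet_derivative (\<lambda>q. Q q (\<xi> p)) (at p) v - d\<xi> v = 0"
      proof -
        have h1: "((\<lambda>q. Q q (\<xi> q) - \<xi> q) has_derivative
             (\<lambda>v. Q p (d\<xi> v) + frechet_derivative (\<lambda>q. Q q (\<xi> p)) (at p) v - d\<xi> v)) (at p)"
          by (intro has_derivative_diff dxi GL[OF oU pU _ Qdiff dxi]) (use P in blast)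
        have h2: "((\<lambda>q. Q q (\<xi> q) - \<xi> q) has_derivative (\<lambda>v. 0)) (at p)"
          by (rule has_derivative_transform_within_open[OF has_derivative_const oU pU]) (use P in simp)
        show ?thesis using fun_cong[OF has_derivative_unique[OF h1 h2], of v] by simp
      qed
      have N\<xi>: "nabla11 \<Gamma> Q p v (\<xi> p) = Wv - Q p Wv"
      proof -
        have "frechet_derivative (\<lambda>q. Q q (\<xi> p)) (at p) v = d\<xi> v - Q p (d\<xi> v)"
          using c1 by (simp add: algebra_simps)
        then show ?thesis unfolding nabla11_def Wv_def using Pp lQ by (simp add: linear_add algebra_simps)
      qed
      have N0: "nabla11 \<Gamma> Q p v (\<xi> p) = 0"
      proof -
        let ?N = "nabla11 \<Gamma> Q p v (\<xi> p)"
        have "g p ?N u = 0" for u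
        proof -
          define u0 where "u0 = u - \<eta> p u *\<^sub>R \<xi> p"
          have "\<eta> p u0 = 0" unfolding u0_def using le Pp by (simp add: linear_diff linear_scale)
          then have "g p ?N u0 = 0" using sa h4 lg1 by (simp add: linear_0)
          moreover have "g p ?N (\<xi> p) = 0"
          proof -
            have "g p (Q p Wv) (\<xi> p) = g p Wv (\<xi> p)" using Qsa[OF pU, of Wv "\<xi> p"] Pp by simp
            then show ?thesis unfolding N\<xi> by (simp add: gl)
          qed
          moreover have "g p ?N u = g p ?N u0 + \<eta> p u * g p ?N (\<xi> p)"
          proof -
            have "g p ?N u = g p ?N (u0 + \<eta> p u *\<^sub>R \<xi> p)" by (simp add: u0_def)
            also have "\<dots> = g p ?N u0 + \<eta> p u * g p ?N (\<xi> p)" by (simp add: gl)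
            finally show ?thesis .
          qed
          ultimately show ?thesis by simp
        qed
        then have z: "g p ?N ?N = 0" by blast
        show ?thesis
        proof (rule ccontr)
          assume "?N \<noteq> 0"
          then have "g p ?N ?N > 0" using Gp by blast
          with z show False by simp
        qed
      qed
      have QW: "Q p Wv = Wv" using N0 N\<xi> by simp
      have "f p (f p Wv) = f p v" unfolding fW using lf fxi[OF pU] by (simp add: linear_diff linear_scale)
      moreover have "f p (f p Wv) = - Wv + \<eta> p Wv *\<^sub>R \<xi> p" using Pp QW by simp
      ultimately have fv: "f p v = - Wv + \<eta> p Wv *\<^sub>R \<xi> p" by simp
      show ?thesis unfolding fv using Pp QW by (simp add: linear_add[OF lQ] linear_neg[OF lQ] linear_scale[OF lQ] linear_diff[OF lQ])
    qed
    have "Q p x = x" for x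
    proof -
      define x0 where "x0 = x - \<eta> p x *\<^sub>R \<xi> p"
      have ex0: "\<eta> p x0 = 0" unfolding x0_def using le Pp by (simp add: linear_diff linear_scale)
      have "f p (f p x0) = - Q p x0" using Pp ex0 by simp
      then have "Q p x0 = f p (- f p x0)" using lf by (simp add: linear_neg)
      then have "Q p (Q p x0) = Q p x0" using Qf by simp
      moreover have "inj (Q p)" using Pp bij_is_inj by blast
      ultimately have Qx0: "Q p x0 = x0" by (meson injD)
      have "Q p x = Q p (x0 + \<eta> p x *\<^sub>R \<xi> p)" by (simp add: x0_def)
      also have "\<dots> = Q p x0 + \<eta> p x *\<^sub>R Q p (\<xi> p)" using lQ by (simp add: linear_add linear_scale)
      also have "\<dots> = x" using Qx0 Pp by (simp add: x0_def)
      finally show ?thesis .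
    qed
    then show ?thesis by auto
  qed
  have sid: "smooth_11 U (\<lambda>p. id)"
    unfolding smooth_11_def smooth_vf_def by (simp add: smooth_fun_const)
  have pt: "\<forall>p\<in>U. linear (f p) \<and> linear (id::'m vec \<Rightarrow> 'm vec) \<and> linear (\<eta> p) \<and>
        dim (range (f p)) = 2 * n \<and>
        (\<forall>v. f p (f p v) = - id v + \<eta> p v *\<^sub>R \<xi> p) \<and>
        \<eta> p (\<xi> p) = 1 \<and> id (\<xi> p) = \<xi> p \<and>
        (\<forall>v. \<eta> p v = 0 \<longrightarrow> \<eta> p (f p v) = 0) \<and>
        bij (id::'m vec \<Rightarrow> 'm vec) \<and>
        (\<forall>v w. g p (f p v) (f p w) = g p v (id w) - \<eta> p v * \<eta> p w)"
  proof
    fix p assume pU: "p \<in> U"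
    show "linear (f p) \<and> linear (id::'m vec \<Rightarrow> 'm vec) \<and> linear (\<eta> p) \<and>
        dim (range (f p)) = 2 * n \<and>
        (\<forall>v. f p (f p v) = - id v + \<eta> p v *\<^sub>R \<xi> p) \<and>
        \<eta> p (\<xi> p) = 1 \<and> id (\<xi> p) = \<xi> p \<and>
        (\<forall>v. \<eta> p v = 0 \<longrightarrow> \<eta> p (f p v) = 0) \<and>
        bij (id::'m vec \<Rightarrow> 'm vec) \<and>
        (\<forall>v w. g p (f p v) (f p w) = g p v (id w) - \<eta> p v * \<eta> p w)"
      using P[OF pU] Qid[OF pU] by (simp add: linear_id bij_id)
  qed
  have "acm_structure n U f \<xi> \<eta> g"
    unfolding acm_structure_def weak_acm_structure_def using W sid pt by blast
  then show ?thesis unfolding sasakian_def using Qid assms(3) by blast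
qed

end
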